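(* Fix $n\ge1$, a finite set of permutation matrices $\{P_1,\dots,P_M\}\subset\mathcal{B}$, and a probability distribution $\mu_0$ on $\mathcal{B}$ with $\mu_0(V_i)>0$ for every $i$, where $V_i=\{X\in\mathcal{B}:\|X-P_i\|_F<\|X-P_j\|_F\text{ for all }j\ne i\}$. Let $v_\theta^\star$ minimize $$L_{\mathrm{CFM}}(v)=\mathbb{E}_{t,X_0}\Bigl[\bigl\|v(X_t,t)-(P^\star(X_0)-X_0)\bigr\|_F^2\Bigr],$$ with $t\sim\mathrm{Unif}(0,1)$, $X_0\sim\mu_0$, $P^\star(X_0)=\arg\min_{P\in\{P_1,\dots,P_M\}}\|X_0-P\|_F$, and $X_t=(1-t)X_0+tP^\star(X_0)$. Draw $K$ i.i.d. samples $X_0^{(1)},\dots,X_0^{(K)}\sim\mu_0$, integrate the ODE $\dot X_t=v_\theta^\star(X_t,t)$ from each to time $1$, and apply Hungarian rounding to each endpoint. Then the resulting $K$ rounded permutations contain every $P_i$, $i=1,\dots,M$, with probability tending to $1$ as $K\to\infty$.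
   Context: $\|\cdot\|_F$ is the Frobenius norm. $\mathcal{B}\subseteq\mathbb{R}^{n\times n}$ is the ambient set of matrices in which the flow takes place (in the paper, the set of matrices with row and column sums equal to one, containing all permutation matrices). Hungarian rounding maps a matrix $X$ to a permutation matrix $P$ maximizing $\operatorname{tr}(X^\top P)$ over all $n\times n$ permutation matrices. *)

theory Defs
  imports "HOL-Analysis.Analysis" "HOL-Probability.Probability"
begin

text \<open>n x n real matrices are represented as real^'n^'n for a finite index type 'n
 (so n = CARD('n) >= 1 is arbitrary but fixed).\<close>

definition frob :: "real^'n^'n \<Rightarrow> real" where
  "frob X = sqrt (\<Sum>i\<in>UNIV. \<Sum>j\<in>UNIV. (X $ i $ j)^2)"

definition Bset :: "(real^'n^'n) set" where
  "Bset = {X. (\<forall>i. (\<Sum>j\<in>UNIV. X $ i $ j) = 1) \<and> (\<forall>j. (\<Sum>i\<in>UNIV. X $ i $ j) = 1)}"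

definition perm_mat :: "('n \<Rightarrow> 'n) \<Rightarrow> real^'n^'n" where
  "perm_mat p = (\<chi> i j. if p i = j then 1 else 0)"

definition is_perm_mat :: "real^'n^'n \<Rightarrow> bool" where
  "is_perm_mat X \<longleftrightarrow> (\<exists>p. p permutes (UNIV :: 'n set) \<and> X = perm_mat p)"

definition hungarian_round :: "real^'n^'n \<Rightarrow> real^'n^'n \<Rightarrow> bool" where
  "hungarian_round X P \<longleftrightarrow> is_perm_mat P \<and>
     (\<forall>Q. is_perm_mat Q \<longrightarrow> trace (transpose X ** Q) \<le> trace (transpose X ** P))"

text \<open>Voronoi cell V_i of P_i inside B (targets P 0, ..., P (M-1)).\<close>
definition voronoi :: "(nat \<Rightarrow> real^'n^'n) \<Rightarrow> nat \<Rightarrow> nat \<Rightarrow> (real^'n^'n) set" where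
  "voronoi P M i = {X \<in> Bset. \<forall>j<M. j \<noteq> i \<longrightarrow> frob (X - P i) < frob (X - P j)}"

text \<open>Nearest target P^*(X0); ties broken towards the least index.\<close>
definition nearest :: "(nat \<Rightarrow> real^'n^'n) \<Rightarrow> nat \<Rightarrow> real^'n^'n \<Rightarrow> real^'n^'n" where
  "nearest P M X = P (LEAST i. i < M \<and> (\<forall>j<M. frob (X - P i) \<le> frob (X - P j)))"

definition interp :: "(nat \<Rightarrow> real^'n^'n) \<Rightarrow> nat \<Rightarrow> real^'n^'n \<Rightarrow> real \<Rightarrow> real^'n^'n" where
  "interp P M X0 t = (1 - t) *\<^sub>R X0 + t *\<^sub>R nearest P M X0"

definition L_CFM :: "(real^'n^'n) measure \<Rightarrow> (nat \<Rightarrow> real^'n^'n) \<Rightarrow> nat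
     \<Rightarrow> (real^'n^'n \<Rightarrow> real \<Rightarrow> real^'n^'n) \<Rightarrow> ennreal" where
  "L_CFM mu0 P M v =
     (\<integral>\<^sup>+ z. ennreal ((frob (v (interp P M (snd z) (fst z)) (fst z)
                         - (nearest P M (snd z) - snd z)))^2)
        \<partial>(uniform_measure lborel {0..1::real} \<Otimes>\<^sub>M mu0))"

definition ode_solution :: "(real^'n^'n \<Rightarrow> real \<Rightarrow> real^'n^'n) \<Rightarrow> real^'n^'n
     \<Rightarrow> (real \<Rightarrow> real^'n^'n) \<Rightarrow> bool" where
  "ode_solution v X0 \<gamma> \<longleftrightarrow>
     (\<forall>t\<in>{0..1}. ((\<lambda>s. v (\<gamma> s) s) has_integral (\<gamma> t - X0)) {0..t})"

end

theory Submission
  imports Defs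
begin


lemma frob_norm: "frob (X::real^'n^'n) = norm X"
proof -
  have "norm X = sqrt (\<Sum>i\<in>UNIV. (norm (X$i))^2)" by (simp add: norm_vec_def L2_set_def)
  also have "\<dots> = sqrt (\<Sum>i\<in>UNIV. \<Sum>j\<in>UNIV. (X$i$j)^2)"
    by (simp add: norm_vec_def L2_set_def sum_nonneg)
  finally show ?thesis by (simp add: frob_def)
qed

lemma closer:
  fixes x a b :: "'a::real_inner"
  assumes "0 < t" "t \<le> 1" "a \<noteq> b" "norm (x - a) \<le> norm (x - b)"
  shows "norm (((1-t) *\<^sub>R x + t *\<^sub>R a) - a) < norm (((1-t) *\<^sub>R x + t *\<^sub>R a) - b)"
proof -
  let ?y = "(1-t) *\<^sub>R x + t *\<^sub>R a"
  have id: "(norm (?y - b))^2 - (norm (?y - a))^2 = (1-t) * ((norm (x-b))^2 - (norm (x-a))^2) + t * (norm (a-b))^2"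
    by (simp add: power2_norm_eq_inner inner_simps algebra_simps)
  have "(norm (x-b))^2 - (norm (x-a))^2 \<ge> 0" using assms(4) by (simp add: power_mono)
  have "t * (norm (a-b))^2 > 0" using assms by simp
  have "(norm (?y - a))^2 < (norm (?y - b))^2" using id \<open>(norm (x-b))^2 - (norm (x-a))^2 \<ge> 0\<close> \<open>t * (norm (a-b))^2 > 0\<close> assms(1,2)
    by (smt (verit) mult_nonneg_nonneg)
  then show ?thesis by (rule power_less_imp_less_base) simp
qed

definition idx :: "(nat \<Rightarrow> real^'n^'n) \<Rightarrow> nat \<Rightarrow> real^'n^'n \<Rightarrow> nat" where
  "idx P M X = (LEAST i. i < M \<and> (\<forall>j<M. frob (X - P i) \<le> frob (X - P j)))"

lemma nearest_idx: "nearest P M X = P (idx P M X)"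
  by (simp add: nearest_def idx_def)

lemma ex_minimal:
  fixes P :: "nat \<Rightarrow> real^'n^'n" and M :: nat
  assumes "M > 0"
  shows "\<exists>i. i < M \<and> (\<forall>j<M. frob (X - P i) \<le> frob (X - P j))"
proof -
  let ?f = "\<lambda>i. frob (X - P i)"
  have fin1: "finite (?f ` {..<M})" by (rule finite_imageI) simp
  have fin2: "?f ` {..<M} \<noteq> {}" using assms by auto
  note fin = fin1 fin2
  then have "Min (?f ` {..<M}) \<in> ?f ` {..<M}" by (rule Min_in)
  then obtain i where i: "i < M" "?f i = Min (?f ` {..<M})" by auto
  have "\<forall>j<M. ?f i \<le> ?f j" using i fin by auto
  with i show ?thesis by blast
qed

lemma idx_minimal:
  assumes "M > 0"
  shows "idx P M X < M \<and> (\<forall>j<M. frob (X - P (idx P M X)) \<le> frob (X - P j))"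
  unfolding idx_def by (rule LeastI_ex[OF ex_minimal[OF assms]])

lemma idx_unique:
  assumes "i < M" "\<forall>j<M. j \<noteq> i \<longrightarrow> frob (X - P i) < frob (X - P j)"
  shows "idx P M X = i"
  unfolding idx_def
proof (rule Least_equality)
  show "i < M \<and> (\<forall>j<M. frob (X - P i) \<le> frob (X - P j))"
    using assms by (metis order.strict_implies_order order_refl)
  fix k assume k: "k < M \<and> (\<forall>j<M. frob (X - P k) \<le> frob (X - P j))"
  show "i \<le> k"
  proof (rule ccontr)
    assume "\<not> i \<le> k"
    then have "k \<noteq> i" by simp
    with assms k have "frob (X - P i) < frob (X - P k)" by blast
    moreover have "frob (X - P k) \<le> frob (X - P i)" using k assms by blast
    ultimately show False by simp
  qed
qed

lemma idx_interp:
  assumes "M > 0" "inj_on P {..<M}" "0 \<le> t" "t < 1"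
  shows "idx P M (interp P M X t) = idx P M X"
proof (cases "t = 0")
  case True then show ?thesis by (simp add: interp_def)
next
  case False
  let ?i = "idx P M X"
  have mi: "?i < M" "\<forall>j<M. frob (X - P ?i) \<le> frob (X - P j)" using idx_minimal[OF assms(1)] by auto
  have "interp P M X t = (1-t) *\<^sub>R X + t *\<^sub>R P ?i" by (simp add: interp_def nearest_idx)
  moreover have "\<forall>j<M. j \<noteq> ?i \<longrightarrow> frob (((1-t) *\<^sub>R X + t *\<^sub>R P ?i) - P ?i) < frob (((1-t) *\<^sub>R X + t *\<^sub>R P ?i) - P j)"
  proof (intro allI impI)
    fix j assume j: "j < M" "j \<noteq> ?i"
    have "P j \<noteq> P ?i" using assms(2) j mi(1) by (metis inj_onD lessThan_iff)
    then show "frob (((1-t) *\<^sub>R X + t *\<^sub>R P ?i) - P ?i) < frob (((1-t) *\<^sub>R X + t *\<^sub>R P ?i) - P j)"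
      unfolding frob_norm using closer[of t "P ?i" "P j" X] False assms(3,4) mi(2) j(1)
      by (auto simp: frob_norm)
  qed
  ultimately show ?thesis using idx_unique[OF mi(1)] by simp
qed

lemma voronoi_idx:
  assumes "i < M" "X \<in> voronoi P M i"
  shows "idx P M X = i"
  using assms by (intro idx_unique) (auto simp: voronoi_def)

lemma idx_measurable: "idx P M \<in> measurable borel (count_space UNIV)"
  unfolding idx_def frob_norm by measurable

lemma nearest_measurable: "nearest P M \<in> borel_measurable borel"
proof -
  have "(\<lambda>X. P (idx P M X)) \<in> borel_measurable borel"
    by (rule measurable_compose[OF idx_measurable]) simp
  then show ?thesis by (simp add: nearest_idx[abs_def])
qed


lemma trace_inner: "trace (transpose X ** (Y::real^'n^'n)) = inner X Y"
proof -
  have "trace (transpose X ** Y) = (\<Sum>i\<in>UNIV. \<Sum>k\<in>UNIV. X$k$i * Y$k$i)"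
    by (simp add: trace_def matrix_matrix_mult_def transpose_def)
  also have "\<dots> = (\<Sum>k\<in>UNIV. \<Sum>i\<in>UNIV. X$k$i * Y$k$i)" by (rule sum.swap)
  also have "\<dots> = inner X Y" by (simp add: inner_vec_def)
  finally show ?thesis .
qed

lemma norm_perm_mat: "inner (perm_mat p) (perm_mat p :: real^'n^'n) = real CARD('n)"
proof -
  have "inner (perm_mat p) (perm_mat p :: real^'n^'n) = (\<Sum>i\<in>(UNIV::'n set). \<Sum>j\<in>UNIV. (if p i = j then 1 else 0))"
    by (simp add: inner_vec_def perm_mat_def if_distrib cong: if_cong)
  also have "\<dots> = (\<Sum>i\<in>(UNIV::'n set). 1)" by (simp add: sum.delta)
  finally show ?thesis by simp
qed

lemma hung_perm:
  assumes "is_perm_mat (X::real^'n^'n)" "hungarian_round X Y"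
  shows "Y = X"
proof -
  have pY: "is_perm_mat Y" and le: "trace (transpose X ** X) \<le> trace (transpose X ** Y)"
    using assms unfolding hungarian_round_def by auto
  obtain p where X: "X = perm_mat p" using assms(1) unfolding is_perm_mat_def by auto
  obtain q where Y: "Y = perm_mat q" using pY unfolding is_perm_mat_def by auto
  have nX: "inner X X = real CARD('n)" and nY: "inner Y Y = real CARD('n)"
    using X Y norm_perm_mat by auto
  have "inner (X - Y) (X - Y) = inner X X + inner Y Y - 2 * inner X Y"
    by (simp add: inner_diff inner_commute)
  also have "\<dots> \<le> 0" using le nX nY by (simp add: trace_inner)
  finally have "inner (X - Y) (X - Y) \<le> 0" .
  then have "inner (X - Y) (X - Y) = 0" by (meson inner_ge_zero order.antisym)
  then have "X - Y = 0" by simp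
  then show ?thesis by simp
qed



definition wopt :: "(nat \<Rightarrow> real^'n^'n) \<Rightarrow> nat \<Rightarrow> real^'n^'n \<Rightarrow> real \<Rightarrow> real^'n^'n" where
  "wopt P M x t = (if t < 1 then (1 / (1 - t)) *\<^sub>R (nearest P M x - x) else 0)"

lemma wopt_meas: "(\<lambda>z. wopt P M (fst z) (snd z)) \<in> borel_measurable borel"
  using nearest_measurable[of P M] unfolding wopt_def borel_prod[symmetric] by measurable

lemma wopt_interp:
  assumes "M > 0" "inj_on P {..<M}" "0 \<le> t" "t < 1"
  shows "wopt P M (interp P M X t) t = nearest P M X - X"
proof -
  have n: "nearest P M (interp P M X t) = nearest P M X"
    using idx_interp[OF assms] by (simp add: nearest_idx)
  have "1 - t \<noteq> 0" using assms by simp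
  have "nearest P M X - interp P M X t = (1 - t) *\<^sub>R (nearest P M X - X)"
    by (simp add: interp_def algebra_simps)
  then show ?thesis using assms(4) \<open>1 - t \<noteq> 0\<close> unfolding wopt_def n
    by simp
qed


lemma U_facts:
  shows "prob_space (uniform_measure lborel {0..1::real})"
    and "AE t in uniform_measure lborel {0..1::real}. 0 \<le> t \<and> t < 1"
proof -
  show "prob_space (uniform_measure lborel {0..1::real})"
    by (intro prob_space_uniform_measure) auto
  have "AE t in lborel. t \<noteq> (1::real)" by (rule AE_lborel_singleton)
  then show "AE t in uniform_measure lborel {0..1::real}. 0 \<le> t \<and> t < 1"
    by (intro AE_uniform_measureI) (auto elim!: AE_mp)
qed

lemma integrand_meas:
  assumes "(\<lambda>z. w (fst z) (snd z)) \<in> borel_measurable borel" "sets mu0 = sets borel"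
  shows "(\<lambda>z. ennreal ((frob (w (interp P M (snd z) (fst z)) (fst z)
                         - (nearest P M (snd z) - snd z)))^2))
        \<in> borel_measurable (uniform_measure lborel {0..1::real} \<Otimes>\<^sub>M mu0)"
proof -
  note nearest_measurable[of P M, measurable]
  have m: "(\<lambda>z. (interp P M (snd z) (fst z), fst z)) \<in> measurable (uniform_measure lborel {0..1::real} \<Otimes>\<^sub>M mu0) borel"
    unfolding borel_prod[symmetric] interp_def
    using assms(2) by (simp cong: measurable_cong_sets) measurable
  have "(\<lambda>z. w (interp P M (snd z) (fst z)) (fst z)) \<in> borel_measurable (uniform_measure lborel {0..1::real} \<Otimes>\<^sub>M mu0)"
    using measurable_compose[OF m assms(1)] by simp
  then show ?thesis unfolding frob_norm using assms(2) by (simp cong: measurable_cong_sets) measurable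
qed

lemma L_wopt:
  assumes "M > 0" "inj_on P {..<M}" "prob_space mu0"
  shows "L_CFM mu0 P M (wopt P M) = 0"
proof -
  let ?U = "uniform_measure lborel {0..1::real}"
  interpret U: prob_space ?U by (rule U_facts)
  interpret mu: prob_space mu0 by (rule assms)
  interpret pair_prob_space ?U mu0 ..
  have ae: "AE z in ?U \<Otimes>\<^sub>M mu0. 0 \<le> fst z \<and> fst z < 1"
  proof (rule AE_pair_measure)
    show "{x \<in> space (?U \<Otimes>\<^sub>M mu0). 0 \<le> fst x \<and> fst x < 1} \<in> sets (?U \<Otimes>\<^sub>M mu0)"
      by measurable
    show "AE x in ?U. AE y in mu0. 0 \<le> fst (x, y) \<and> fst (x, y) < 1"
      using U_facts(2) by (auto elim!: AE_mp)
  qed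
  show ?thesis unfolding L_CFM_def
    apply (rule order.antisym[OF _ zero_le])
    apply (subst nn_integral_cong_AE[where v = "\<lambda>_. 0"])
    using ae apply (rule AE_mp) apply (auto simp: wopt_interp[OF assms(1,2)] frob_def)
    done
qed


lemma core:
  fixes mu0 :: "(real^'n^'n) measure"
    and P :: "nat \<Rightarrow> real^'n^'n" and M :: nat
    and v :: "real^'n^'n \<Rightarrow> real \<Rightarrow> real^'n^'n"
    and \<Phi> :: "real^'n^'n \<Rightarrow> real^'n^'n"
  assumes M: "M > 0"
    and distinct: "inj_on P {..<M}"
    and prob: "prob_space mu0"
    and sets_mu0: "sets mu0 = sets borel"
    and v_meas: "(\<lambda>z. v (fst z) (snd z)) \<in> borel_measurable borel"
    and v_min: "\<forall>w. (\<lambda>z. w (fst z) (snd z)) \<in> borel_measurable borel \<longrightarrow>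
                   L_CFM mu0 P M v \<le> L_CFM mu0 P M w"
    and flow: "AE X0 in mu0. (\<exists>\<gamma>. ode_solution v X0 \<gamma>) \<and>
                  (\<forall>\<gamma>. ode_solution v X0 \<gamma> \<longrightarrow> \<gamma> 1 = \<Phi> X0)"
  shows "AE X in mu0. \<Phi> X = nearest P M X"
proof -
  let ?U = "uniform_measure lborel {0..1::real}"
  interpret U: prob_space ?U by (rule U_facts)
  interpret mu: prob_space mu0 by (rule prob)
  interpret pair_prob_space ?U mu0 ..
  let ?Q = "\<lambda>t X. v (interp P M X t) t = nearest P M X - X"
  have L0: "L_CFM mu0 P M v = 0"
    using v_min wopt_meas[of P M] L_wopt[OF M distinct prob] by (metis le_zero_eq)
  have "AE z in ?U \<Otimes>\<^sub>M mu0. ennreal ((frob (v (interp P M (snd z) (fst z)) (fst z)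
                         - (nearest P M (snd z) - snd z)))^2) = 0"
    using L0 unfolding L_CFM_def
    by (subst (asm) nn_integral_0_iff_AE[OF integrand_meas[OF v_meas sets_mu0]]) simp
  then have ae1: "AE z in ?U \<Otimes>\<^sub>M mu0. ?Q (fst z) (snd z)"
    by (rule AE_mp) (auto simp: frob_norm)
  have Qmeas: "{x \<in> space (?U \<Otimes>\<^sub>M mu0). ?Q (fst x) (snd x)} \<in> sets (?U \<Otimes>\<^sub>M mu0)"
  proof -
    note nearest_measurable[of P M, measurable]
    have m: "(\<lambda>z. (interp P M (snd z) (fst z), fst z)) \<in> measurable (?U \<Otimes>\<^sub>M mu0) borel"
      unfolding borel_prod[symmetric] interp_def
      using sets_mu0 by (simp cong: measurable_cong_sets) measurable
    have [measurable]: "(\<lambda>z. v (interp P M (snd z) (fst z)) (fst z)) \<in> borel_measurable (?U \<Otimes>\<^sub>M mu0)"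
      using measurable_compose[OF m v_meas] by simp
    have idm: "(\<lambda>x. x) \<in> measurable mu0 borel" using sets_mu0 by (simp cong: measurable_cong_sets)
    have [measurable]: "(\<lambda>z. nearest P M (snd z) - snd z) \<in> borel_measurable (?U \<Otimes>\<^sub>M mu0)"
      using measurable_compose[OF measurable_snd idm] by measurable
    have "{x \<in> space (?U \<Otimes>\<^sub>M mu0). norm (v (interp P M (snd x) (fst x)) (fst x) - (nearest P M (snd x) - snd x)) = 0} \<in> sets (?U \<Otimes>\<^sub>M mu0)"
      by measurable
    then show ?thesis by simp
  qed
  have "AE t in ?U. AE X in mu0. ?Q t X"
    using ae1 AE_pair_iff[OF Qmeas] by simp
  then have ae2: "AE X in mu0. AE t in ?U. ?Q t X"
    using AE_commute[OF Qmeas] by simp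
  show ?thesis
    using ae2 flow
  proof (eventually_elim)
    case (elim X0)
    have "AE t in lborel. t \<in> {0..1} \<longrightarrow> ?Q t X0"
      using elim(1) by (subst (asm) AE_uniform_measure) auto
    then obtain N where N: "{t \<in> space lborel. \<not> (t \<in> {0..1} \<longrightarrow> ?Q t X0)} \<subseteq> N"
       "emeasure lborel N = 0" "N \<in> sets lborel"
      by (rule AE_E)
    have negN: "negligible N"
      unfolding negligible_iff_null_sets using N(2,3)
      by (intro null_sets_completionI) auto
    define \<gamma> where "\<gamma> = interp P M X0"
    have ode: "ode_solution v X0 \<gamma>"
      unfolding ode_solution_def
    proof
      fix t :: real assume t: "t \<in> {0..1}"
      have "((\<lambda>s. nearest P M X0 - X0) has_integral (measure lborel {0..t} *\<^sub>R (nearest P M X0 - X0))) {0..t}"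
        by (rule has_integral_const_real)
      moreover have "measure lborel {0..t} *\<^sub>R (nearest P M X0 - X0) = \<gamma> t - X0"
        using t by (simp add: \<gamma>_def interp_def algebra_simps)
      ultimately have "((\<lambda>s. nearest P M X0 - X0) has_integral (\<gamma> t - X0)) {0..t}" by simp
      then show "((\<lambda>s. v (\<gamma> s) s) has_integral (\<gamma> t - X0)) {0..t}"
      proof (rule has_integral_spike[OF negN, rotated])
        fix s assume s: "s \<in> {0..t} - N"
        then have "s \<in> {0..1}" using t by auto
        with s N(1) show "v (\<gamma> s) s = nearest P M X0 - X0" unfolding \<gamma>_def by auto
      qed
    qed
    then have "\<gamma> 1 = \<Phi> X0" using elim(2) by blast
    then show ?case by (simp add: \<gamma>_def interp_def)
  qed
qed



lemma measure_PiE_power: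
  fixes mu0 :: "'a measure"
  assumes prob: "prob_space mu0" and A: "A \<in> sets mu0"
  shows "measure (PiM {..<K} (\<lambda>_. mu0)) (PiE {..<K} (\<lambda>_. A)) = (measure mu0 A) ^ K"
proof -
  interpret mu: prob_space mu0 by (rule prob)
  interpret PS: product_prob_space "\<lambda>_::nat. mu0" "{..<K}"
    by unfold_locales
  have "emeasure (PiM {..<K} (\<lambda>_. mu0)) (PiE {..<K} (\<lambda>_. A)) = (\<Prod>i\<in>{..<K}. emeasure mu0 A)"
    using A by (intro PS.emeasure_PiM) auto
  also have "\<dots> = ennreal ((measure mu0 A) ^ K)"
    by (simp add: mu.emeasure_eq_measure ennreal_power)
  finally show ?thesis by (simp add: measure_def)
qed

lemma prod_bound:
  fixes mu0 :: "'a measure" and f :: "'a \<Rightarrow> 'b" and P :: "nat \<Rightarrow> 'b"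
  assumes prob: "prob_space mu0" and sp: "space mu0 = UNIV"
    and N: "N \<in> null_sets mu0"
    and D: "\<forall>i<M. D i \<in> sets mu0"
    and D1: "\<forall>i<M. \<forall>X\<in>D i. f X = P i"
    and D2: "\<forall>X. X \<notin> N \<longrightarrow> (\<forall>i<M. f X = P i \<longrightarrow> X \<in> D i)"
  shows "{xs \<in> space (PiM {..<K} (\<lambda>_. mu0)). \<forall>i<M. \<exists>k<K. f (xs k) = P i}
           \<in> sets (completion (PiM {..<K} (\<lambda>_. mu0)))"
    and "1 - (\<Sum>i<M. (1 - measure mu0 (D i)) ^ K) \<le> measure (completion (PiM {..<K} (\<lambda>_. mu0)))
            {xs \<in> space (PiM {..<K} (\<lambda>_. mu0)). \<forall>i<M. \<exists>k<K. f (xs k) = P i}"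
proof -
  let ?Pi = "PiM {..<K} (\<lambda>_. mu0)"
  let ?A = "{xs \<in> space ?Pi. \<forall>i<M. \<exists>k<K. f (xs k) = P i}"
  interpret mu: prob_space mu0 by (rule prob)
  interpret Pi: prob_space ?Pi by (intro prob_space_PiM prob)
  interpret CPi: prob_space "completion ?Pi" by (rule Pi.prob_space_completion)
  have spPi: "space ?Pi = PiE {..<K} (\<lambda>_. UNIV)" by (simp add: space_PiM sp)
  define F where "F i = PiE {..<K} (\<lambda>_. UNIV - D i)" for i
  define E where "E = space ?Pi - (\<Union>i<M. F i)"
  define Z where "Z = space ?Pi - PiE {..<K} (\<lambda>_. UNIV - N)"
  have Fs: "F i \<in> sets ?Pi" if "i < M" for i
    unfolding F_def using D that sp by (intro sets_PiM_I_finite) (auto, metis sets.compl_sets)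
  have mF: "measure ?Pi (F i) = (1 - measure mu0 (D i)) ^ K" if "i < M" for i
  proof -
    have "UNIV - D i = space mu0 - D i" using sp by simp
    then have "measure mu0 (UNIV - D i) = 1 - measure mu0 (D i)"
      using mu.prob_compl D that by simp
    moreover have "UNIV - D i \<in> sets mu0" using D that sp by (metis sets.compl_sets)
    ultimately show ?thesis unfolding F_def using measure_PiE_power[OF prob] by simp
  qed
  have Es: "E \<in> sets ?Pi" unfolding E_def using Fs by auto
  have NN: "UNIV - N \<in> sets mu0" using N sp by (metis null_setsD2 sets.compl_sets)
  have mN: "measure mu0 (UNIV - N) = 1"
    using mu.prob_compl[of N] N sp by (simp add: measure_eq_0_null_sets[OF N] null_setsD2)
  have Zs: "Z \<in> sets ?Pi" unfolding Z_def by (intro sets.Diff sets.top sets_PiM_I_finite finite_lessThan NN)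
  have "measure ?Pi Z = 1 - measure ?Pi (PiE {..<K} (\<lambda>_. UNIV - N))"
    unfolding Z_def by (intro Pi.prob_compl sets_PiM_I_finite finite_lessThan NN)
  also have "\<dots> = 0" using measure_PiE_power[OF prob NN, of K] mN by simp
  finally have Znull: "Z \<in> null_sets ?Pi" using Zs by (simp add: Pi.emeasure_eq_measure null_sets_def)
  have EA: "E \<subseteq> ?A"
  proof
    fix xs assume "xs \<in> E"
    then have xs: "xs \<in> space ?Pi" "\<forall>i<M. xs \<notin> F i" unfolding E_def by auto
    show "xs \<in> ?A"
    proof (simp add: xs(1), intro allI impI)
      fix i assume i: "i < M"
      then have "xs \<notin> F i" using xs by auto
      moreover have "\<forall>k. k \<notin> {..<K} \<longrightarrow> xs k = undefined" using xs(1) spPi by (auto simp: PiE_def extensional_def)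
      ultimately obtain k where "k < K" "xs k \<in> D i" unfolding F_def by (auto simp: PiE_def extensional_def)
      then show "\<exists>k<K. f (xs k) = P i" using D1 i by blast
    qed
  qed
  have AEZ: "?A - E \<subseteq> Z"
  proof
    fix xs assume xs: "xs \<in> ?A - E"
    show "xs \<in> Z"
    proof (rule ccontr)
      assume "xs \<notin> Z"
      then have nN: "\<forall>k<K. xs k \<notin> N" using xs spPi unfolding Z_def by (auto simp: PiE_def)
      have "xs \<in> E" unfolding E_def F_def
      proof (intro DiffI)
        show "xs \<in> space ?Pi" using xs by auto
        show "xs \<notin> (\<Union>i<M. PiE {..<K} (\<lambda>_. UNIV - D i))"
        proof
          assume "xs \<in> (\<Union>i<M. PiE {..<K} (\<lambda>_. UNIV - D i))"
          then obtain i where i: "i < M" "\<forall>k<K. xs k \<notin> D i" by (auto simp: PiE_def)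
          from xs i obtain k where "k < K" "f (xs k) = P i" by auto
          then show False using D2 nN i by blast
        qed
      qed
      then show False using xs by auto
    qed
  qed
  have Aeq: "?A = E \<union> (?A - E)" using EA by auto
  show As: "?A \<in> sets (completion ?Pi)"
    by (rule sets_completionI[OF Aeq AEZ Znull Es])
  have "measure ?Pi (\<Union>i<M. F i) \<le> (\<Sum>i<M. measure ?Pi (F i))"
    using Fs by (intro measure_UNION_le) auto
  also have "\<dots> = (\<Sum>i<M. (1 - measure mu0 (D i)) ^ K)" using mF by simp
  finally have "measure ?Pi (\<Union>i<M. F i) \<le> (\<Sum>i<M. (1 - measure mu0 (D i)) ^ K)" .
  moreover have UF: "(\<Union>i<M. F i) \<in> sets ?Pi" using Fs by (intro sets.finite_UN) auto
  moreover have "measure ?Pi E = 1 - measure ?Pi (\<Union>i<M. F i)"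
    unfolding E_def by (rule Pi.prob_compl[OF UF])
  ultimately have "1 - (\<Sum>i<M. (1 - measure mu0 (D i)) ^ K) \<le> measure ?Pi E"
    by linarith
  also have "\<dots> = measure (completion ?Pi) E" by (rule measure_completion[OF Es, symmetric])
  also have "\<dots> \<le> measure (completion ?Pi) ?A"
    by (rule CPi.finite_measure_mono[OF EA As])
  finally show "1 - (\<Sum>i<M. (1 - measure mu0 (D i)) ^ K) \<le> measure (completion ?Pi) ?A" .
qed


theorem corollary1:
  fixes mu0 :: "(real^'n^'n) measure"
    and P :: "nat \<Rightarrow> real^'n^'n" and M :: nat
    and v :: "real^'n^'n \<Rightarrow> real \<Rightarrow> real^'n^'n"
    and \<Phi> :: "real^'n^'n \<Rightarrow> real^'n^'n"
    and hung :: "real^'n^'n \<Rightarrow> real^'n^'n"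
  assumes perm: "\<forall>i<M. is_perm_mat (P i)"
    and distinct: "inj_on P {..<M}"
    and prob: "prob_space mu0"
    and sets_mu0: "sets mu0 = sets borel"
    and supp: "measure mu0 Bset = 1"
    and cells: "\<forall>i<M. measure mu0 (voronoi P M i) > 0"
    and v_meas: "(\<lambda>z. v (fst z) (snd z)) \<in> borel_measurable borel"
    and v_min: "\<forall>w. (\<lambda>z. w (fst z) (snd z)) \<in> borel_measurable borel \<longrightarrow>
                   L_CFM mu0 P M v \<le> L_CFM mu0 P M w"
    and flow: "AE X0 in mu0. (\<exists>\<gamma>. ode_solution v X0 \<gamma>) \<and>
                  (\<forall>\<gamma>. ode_solution v X0 \<gamma> \<longrightarrow> \<gamma> 1 = \<Phi> X0)"
    and hung: "\<forall>X. hungarian_round X (hung X)"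
  shows "(\<lambda>K. measure (completion (PiM {..<K} (\<lambda>_. mu0)))
            {xs \<in> space (PiM {..<K} (\<lambda>_. mu0)).
               \<forall>i<M. \<exists>k<K. hung (\<Phi> (xs k)) = P i}) \<longlonglongrightarrow> 1"
proof -
  have PiP: "prob_space (PiM {..<K} (\<lambda>_. mu0))" for K :: nat
    by (rule prob_space_PiM) (rule prob)
  have CP: "prob_space (completion (PiM {..<K} (\<lambda>_. mu0)))" for K :: nat
    by (rule prob_space.prob_space_completion[OF PiP])
  show ?thesis
proof (cases "M = 0")
  case True
  have "measure (completion (PiM {..<K} (\<lambda>_. mu0)))
            {xs \<in> space (PiM {..<K} (\<lambda>_. mu0)). \<forall>i<M. \<exists>k<K. hung (\<Phi> (xs k)) = P i} = 1" for K :: nat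
  proof -
    have "{xs \<in> space (PiM {..<K} (\<lambda>_. mu0)). \<forall>i<M. \<exists>k<K. hung (\<Phi> (xs k)) = P i} = space (completion (PiM {..<K} (\<lambda>_. mu0)))"
      using True by simp
    then show ?thesis using prob_space.prob_space[OF CP[of K]] by simp
  qed
  then show ?thesis
    by (intro Lim_transform_eventually[OF tendsto_const] always_eventually allI) (rule sym)
next
  case False
  then have M: "M > 0" by simp
  interpret mu: prob_space mu0 by (rule prob)
  have sp: "space mu0 = UNIV" using sets_eq_imp_space_eq[OF sets_mu0] by simp
  have "AE X in mu0. \<Phi> X = nearest P M X"
    by (rule core[OF M distinct prob sets_mu0 v_meas v_min flow])
  then obtain N where N: "{x \<in> space mu0. \<not> \<Phi> x = nearest P M x} \<subseteq> N" "emeasure mu0 N = 0" "N \<in> sets mu0"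
    by (rule AE_E)
  have Nnull: "N \<in> null_sets mu0" using N by auto
  have hf: "hung (\<Phi> X) = nearest P M X" if "X \<notin> N" for X
  proof -
    have "\<Phi> X = nearest P M X" using N(1) that sp by auto
    moreover have "is_perm_mat (nearest P M X)"
      using perm idx_minimal[OF M, of P X] by (simp add: nearest_idx)
    ultimately show ?thesis using hung_perm[of "nearest P M X" "hung (nearest P M X)"] hung by simp
  qed
  define D where "D i = {X. nearest P M X = P i} - N" for i
  have Ds: "D i \<in> sets mu0" for i
  proof -
    have "nearest P M -` {P i} \<inter> space borel \<in> sets borel"
      by (rule measurable_sets[OF nearest_measurable]) simp
    then have "{X. nearest P M X = P i} \<in> sets mu0" using sets_mu0 by (simp add: vimage_def)
    then show ?thesis unfolding D_def using N(3) by auto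
  qed
  have Dpos: "measure mu0 (D i) > 0" if i: "i < M" for i
  proof -
    have sub: "voronoi P M i \<subseteq> {X. nearest P M X = P i}"
      using voronoi_idx[OF i] by (auto simp: nearest_idx)
    have "nearest P M -` {P i} \<inter> space borel \<in> sets borel"
      by (rule measurable_sets[OF nearest_measurable]) simp
    then have Cs: "{X. nearest P M X = P i} \<in> sets mu0" using sets_mu0 by (simp add: vimage_def)
    have "measure mu0 (D i) = measure mu0 {X. nearest P M X = P i}"
      unfolding D_def by (rule measure_Diff_null_set[OF Cs Nnull])
    also have "\<dots> \<ge> measure mu0 (voronoi P M i)" by (rule mu.finite_measure_mono[OF sub Cs])
    finally show ?thesis using cells i by auto
  qed
  have D1: "\<forall>i<M. \<forall>X\<in>D i. hung (\<Phi> X) = P i" using hf unfolding D_def by auto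
  have D2: "\<forall>X. X \<notin> N \<longrightarrow> (\<forall>i<M. hung (\<Phi> X) = P i \<longrightarrow> X \<in> D i)" using hf unfolding D_def by auto
  note pb = prod_bound[OF prob sp Nnull _ D1 D2]
  let ?a = "\<lambda>K. measure (completion (PiM {..<K} (\<lambda>_. mu0)))
            {xs \<in> space (PiM {..<K} (\<lambda>_. mu0)). \<forall>i<M. \<exists>k<K. hung (\<Phi> (xs k)) = P i}"
  have low: "1 - (\<Sum>i<M. (1 - measure mu0 (D i)) ^ K) \<le> ?a K" for K :: nat
    by (rule pb(2)) (simp add: Ds)
  have up: "?a K \<le> 1" for K :: nat
    by (rule prob_space.prob_le_1[OF CP])
  have lim: "(\<lambda>K. 1 - (\<Sum>i<M. (1 - measure mu0 (D i)) ^ K)) \<longlonglongrightarrow> 1 - (\<Sum>i<M. 0)"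
  proof (intro tendsto_diff tendsto_const tendsto_sum LIMSEQ_power_zero)
    fix i assume "i \<in> {..<M}"
    then have "0 < measure mu0 (D i)" "measure mu0 (D i) \<le> 1" using Dpos by auto
    then show "norm (1 - measure mu0 (D i)) < 1" by simp
  qed
  have lim': "(\<lambda>K. 1 - (\<Sum>i<M. (1 - measure mu0 (D i)) ^ K)) \<longlonglongrightarrow> 1"
    using lim by simp
  have ev1: "\<forall>\<^sub>F K in sequentially. 1 - (\<Sum>i<M. (1 - measure mu0 (D i)) ^ K) \<le> ?a K"
    by (rule always_eventually) (intro allI low)
  have ev2: "\<forall>\<^sub>F K in sequentially. ?a K \<le> 1"
    by (rule always_eventually) (intro allI up)
  show ?thesis
    by (rule tendsto_sandwich[OF ev1 ev2 lim' tendsto_const])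
qed
qed


end
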